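(* Let $k$ be a natural number and let $q \in C^1(\mathbb{R}^n,\mathbb{R})$ be a scalar function such that there exists $m$ with $q(\mathbf{x}) = f(x_m)\cdot \mathbf{x}_{i\neq m}^{\beta}$ for a multi-index $\beta\in\mathbb{N}_0^{n-1}$ and $f$ any function of $x_m$ that can be integrated. Set $\lambda = \left\lceil \frac{|\beta|-1}{2}\right\rceil$ and $W(\mathbf{x}) = \mathcal{A}_{x_m}^{2\lambda+2k} q(\mathbf{x}) = \mathbf{x}_{i\neq m}^{\beta}\, \mathcal{A}_{x_m}^{2\lambda+2k} f(x_m)$. Then $$Q(\mathbf{x}) := \sum_{p=0}^{\lambda} (-1)^p \binom{k+p-1}{p} \partial_{x_m}^{2\lambda-2p}\, \Delta_{\setminus m}^{p} W(\mathbf{x}) = \sum_{p=0}^{\lambda} (-1)^p \binom{k+p-1}{p} \mathcal{A}_{x_m}^{2k+2p}\, \Delta_{\setminus m}^{p} q(\mathbf{x})$$ satisfies $\Delta^k Q = q$, where $\Delta=\sum_{i=1}^n\partial_{x_i}^2$.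
   Context: $\mathbf{x}_{i\neq m}^{\beta}$ denotes $\prod_{i\neq m} x_i^{\beta_i}$ and $|\beta|$ its total degree; $\lceil h\rceil$ is the least integer $\ge h$. The incomplete Laplacian is $\Delta_{\setminus m} f := \sum_{i\neq m}\partial_{x_i}^2 f$, with $\Delta_{\setminus m}^p$ its $p$-fold application. The antiderivative is $\mathcal{A}_{x_j} f(\mathbf{x}) := \int_{x_0}^{x_j} f(x_1,\dots,\xi_j,\dots,x_n)\,d\xi_j$ with freely chosen lower limit $x_0$, and $\mathcal{A}_{x_j}^p := \mathcal{A}_{x_j}^{p-1}\mathcal{A}_{x_j}$ (repeated integration). Zeroth powers of these operators are the identity. *)

theory Defs
  imports "HOL-Analysis.Analysis"
begin

definition vupd :: "real^'n \<Rightarrow> 'n \<Rightarrow> real \<Rightarrow> real^'n" where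
  "vupd x j t = (\<chi> i. if i = j then t else x $ i)"

definition partial :: "'n \<Rightarrow> (real^'n \<Rightarrow> real) \<Rightarrow> (real^'n \<Rightarrow> real)" where
  "partial j F = (\<lambda>x. deriv (\<lambda>t. F (vupd x j t)) (x $ j))"

definition oint :: "real \<Rightarrow> real \<Rightarrow> (real \<Rightarrow> real) \<Rightarrow> real" where
  "oint a b g = (if a \<le> b then integral {a..b} g else - integral {b..a} g)"

definition antider :: "real \<Rightarrow> 'n \<Rightarrow> (real^'n \<Rightarrow> real) \<Rightarrow> (real^'n \<Rightarrow> real)" where
  "antider x0 j F = (\<lambda>x. oint x0 (x $ j) (\<lambda>t. F (vupd x j t)))"

definition antider1 :: "real \<Rightarrow> (real \<Rightarrow> real) \<Rightarrow> (real \<Rightarrow> real)" where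
  "antider1 x0 g = (\<lambda>t. oint x0 t g)"

definition laplacian :: "(real^'n \<Rightarrow> real) \<Rightarrow> (real^'n \<Rightarrow> real)" where
  "laplacian F = (\<lambda>x. \<Sum>i\<in>UNIV. (partial i ^^ 2) F x)"

definition laplacian_without :: "'n \<Rightarrow> (real^'n \<Rightarrow> real) \<Rightarrow> (real^'n \<Rightarrow> real)" where
  "laplacian_without m F = (\<lambda>x. \<Sum>i\<in>UNIV - {m}. (partial i ^^ 2) F x)"

definition mono_wo :: "'n \<Rightarrow> ('n \<Rightarrow> nat) \<Rightarrow> real^'n \<Rightarrow> real" where
  "mono_wo m \<beta> x = (\<Prod>i\<in>UNIV - {m}. (x $ i) ^ \<beta> i)"

definition deg_wo :: "'n \<Rightarrow> ('n \<Rightarrow> nat) \<Rightarrow> nat" where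
  "deg_wo m \<beta> = (\<Sum>i\<in>UNIV - {m}. \<beta> i)"

end

theory Submission
  imports Defs
begin


lemma oint_deriv:
  assumes h: "continuous_on UNIV h"
  shows "((\<lambda>s. oint x0 s h) has_real_derivative h t) (at t)"
proof -
  define c where "c = min x0 t - 1"
  define b where "b = max x0 t + 1"
  have eq: "oint x0 s h = integral {c..s} h - integral {c..x0} h" if "s \<in> {c<..<b}" for s
  proof (cases "x0 \<le> s")
    case True
    have "integral {c..x0} h + integral {x0..s} h = integral {c..s} h"
      by (rule Henstock_Kurzweil_Integration.integral_combine) (use True c_def in \<open>auto intro!: integrable_continuous_real continuous_on_subset[OF h]\<close>)
    then show ?thesis using True by (simp add: oint_def)
  next
    case False
    have "integral {c..s} h + integral {s..x0} h = integral {c..x0} h"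
      by (rule Henstock_Kurzweil_Integration.integral_combine) (use False that c_def in \<open>auto intro!: integrable_continuous_real continuous_on_subset[OF h]\<close>)
    then show ?thesis using False by (simp add: oint_def)
  qed
  have "((\<lambda>s. integral {c..s} h) has_real_derivative h t) (at t within {c..b})"
    by (rule integral_has_real_derivative) (auto simp: c_def b_def intro: continuous_on_subset[OF h])
  then have "((\<lambda>s. integral {c..s} h) has_real_derivative h t) (at t)"
    by (simp add: at_within_Icc_at c_def b_def)
  then have "((\<lambda>s. integral {c..s} h - integral {c..x0} h) has_real_derivative h t) (at t)"
    using DERIV_diff[OF _ DERIV_const] by fastforce
  then show ?thesis
    by (rule has_field_derivative_transform_within_open[where S="{c<..<b}"])
       (auto simp: c_def b_def eq)
qed

lemma antider1_deriv:
  "continuous_on UNIV h \<Longrightarrow> (antider1 x0 h has_real_derivative h t) (at t)"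
  unfolding antider1_def by (rule oint_deriv)

lemma antider1_cont:
  "continuous_on UNIV h \<Longrightarrow> continuous_on UNIV (antider1 x0 h)"
  by (meson DERIV_isCont antider1_deriv continuous_at_imp_continuous_on)

lemma antider1_pow_cont:
  "continuous_on UNIV h \<Longrightarrow> continuous_on UNIV ((antider1 x0 ^^ n) h)"
  by (induction n) (auto intro: antider1_cont)

lemma antider1_pow_deriv:
  "continuous_on UNIV h \<Longrightarrow> ((antider1 x0 ^^ Suc n) h has_real_derivative (antider1 x0 ^^ n) h t) (at t)"
  by (simp add: antider1_deriv antider1_pow_cont)

lemma vupd_nth[simp]: "vupd x j t $ i = (if i = j then t else x $ i)"
  by (simp add: vupd_def)

lemma vupd_same[simp]: "vupd x j (x $ j) = x"
  by (simp add: vupd_def vec_eq_iff)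

lemma vupd_vupd[simp]: "vupd (vupd x j s) j t = vupd x j t"
  by (simp add: vupd_def vec_eq_iff)



inductive poly_deg :: "'n \<Rightarrow> nat \<Rightarrow> (real^'n \<Rightarrow> real) \<Rightarrow> bool" for m :: 'n where
  pconst: "poly_deg m d (\<lambda>x. c)"
| pmulx: "poly_deg m d P \<Longrightarrow> i \<noteq> m \<Longrightarrow> poly_deg m (Suc d) (\<lambda>x. x$i * P x)"
| padd: "poly_deg m d P \<Longrightarrow> poly_deg m d Q \<Longrightarrow> poly_deg m d (\<lambda>x. P x + Q x)"
| pweak: "poly_deg m d P \<Longrightarrow> d \<le> e \<Longrightarrow> poly_deg m e P"

lemma poly_deg_main:
  "poly_deg m d P \<Longrightarrow> (\<forall>x t. P (vupd x m t) = P x) \<and>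
    (\<forall>i. i \<noteq> m \<longrightarrow> (\<exists>P'. poly_deg m (d-1) P' \<and> (d = 0 \<longrightarrow> P' = (\<lambda>x. 0)) \<and>
       (\<forall>x. ((\<lambda>t. P (vupd x i t)) has_real_derivative P' x) (at (x$i)))))"
proof (induction rule: poly_deg.induct)
  case (pconst d c)
  then show ?case by (auto intro!: exI[of _ "\<lambda>x. 0"] poly_deg.pconst)
next
  case (pmulx d P i)
  show ?case
  proof (intro conjI allI impI)
    fix x t show "(vupd x m t) $ i * P (vupd x m t) = x $ i * P x"
      using pmulx by auto
  next
    fix j assume j: "j \<noteq> m"
    obtain P' where P': "poly_deg m (d-1) P'" "d = 0 \<longrightarrow> P' = (\<lambda>x. 0)"
      "\<And>x. ((\<lambda>t. P (vupd x j t)) has_real_derivative P' x) (at (x$j))"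
      using pmulx j by blast
    have xP': "poly_deg m d (\<lambda>x. x$i * P' x)"
    proof (cases d)
      case 0
      then show ?thesis using P' poly_deg.pconst[of m 0 0] by simp
    next
      case (Suc d')
      then show ?thesis using poly_deg.pmulx[OF P'(1) pmulx(2)] by simp
    qed
    show "\<exists>P''. poly_deg m (Suc d - 1) P'' \<and> (Suc d = 0 \<longrightarrow> P'' = (\<lambda>x. 0)) \<and>
       (\<forall>x. ((\<lambda>t. (vupd x j t) $ i * P (vupd x j t)) has_real_derivative P'' x) (at (x$j)))"
    proof (cases "j = i")
      case True
      show ?thesis
      proof (intro exI conjI allI)
        show "poly_deg m (Suc d - 1) (\<lambda>x. P x + x$i * P' x)"
          using poly_deg.padd[OF pmulx(1) xP'] by simp
        fix x
        have "((\<lambda>t. t * P (vupd x i t)) has_real_derivative 1 * P (vupd x i (x$i)) + P' x * x$i) (at (x$i))"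
          using P'(3)[of x] True by (intro DERIV_mult) (auto intro: derivative_eq_intros)
        then show "((\<lambda>t. (vupd x j t) $ i * P (vupd x j t)) has_real_derivative P x + x$i * P' x) (at (x$j))"
          using True by (simp add: mult.commute)
      qed simp
    next
      case False
      show ?thesis
      proof (intro exI conjI allI)
        show "poly_deg m (Suc d - 1) (\<lambda>x. x$i * P' x)"
          using xP' by simp
        fix x
        have "((\<lambda>t. x$i * P (vupd x j t)) has_real_derivative x$i * P' x) (at (x$j))"
          using P'(3)[of x] by (intro DERIV_cmult)
        then show "((\<lambda>t. (vupd x j t) $ i * P (vupd x j t)) has_real_derivative x$i * P' x) (at (x$j))"
          using False by simp
      qed simp
    qed
  qed
next
  case (padd d P Q)
  show ?case
  proof (intro conjI allI impI)
    fix x t show "P (vupd x m t) + Q (vupd x m t) = P x + Q x" using padd by auto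
  next
    fix j assume j: "j \<noteq> m"
    obtain P' where P': "poly_deg m (d-1) P'" "d = 0 \<longrightarrow> P' = (\<lambda>x. 0)"
      "\<And>x. ((\<lambda>t. P (vupd x j t)) has_real_derivative P' x) (at (x$j))"
      using padd j by blast
    obtain Q' where Q': "poly_deg m (d-1) Q'" "d = 0 \<longrightarrow> Q' = (\<lambda>x. 0)"
      "\<And>x. ((\<lambda>t. Q (vupd x j t)) has_real_derivative Q' x) (at (x$j))"
      using padd j by blast
    show "\<exists>P''. poly_deg m (d - 1) P'' \<and> (d = 0 \<longrightarrow> P'' = (\<lambda>x. 0)) \<and>
       (\<forall>x. ((\<lambda>t. P (vupd x j t) + Q (vupd x j t)) has_real_derivative P'' x) (at (x$j)))"
      by (rule exI[of _ "\<lambda>x. P' x + Q' x"])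
         (use P' Q' in \<open>auto intro: poly_deg.padd DERIV_add\<close>)
  qed
next
  case (pweak d P e)
  show ?case
  proof (intro conjI allI impI)
    fix x t show "P (vupd x m t) = P x" using pweak by auto
  next
    fix j assume j: "j \<noteq> m"
    obtain P' where P': "poly_deg m (d-1) P'" "d = 0 \<longrightarrow> P' = (\<lambda>x. 0)"
      "\<And>x. ((\<lambda>t. P (vupd x j t)) has_real_derivative P' x) (at (x$j))"
      using pweak j by blast
    show "\<exists>P'. poly_deg m (e - 1) P' \<and> (e = 0 \<longrightarrow> P' = (\<lambda>x. 0)) \<and>
       (\<forall>x. ((\<lambda>t. P (vupd x j t)) has_real_derivative P' x) (at (x$j)))"
      by (rule exI[of _ P']) (use P' pweak(2) in \<open>auto intro: poly_deg.pweak\<close>)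
  qed
qed

lemma pd_indep: "poly_deg m d P \<Longrightarrow> P (vupd x m t) = P x"
  using poly_deg_main by blast

lemma pd_deriv_ex:
  assumes "poly_deg m d P" "i \<noteq> m"
  shows "partial i P = (SOME P'. poly_deg m (d-1) P' \<and> (d = 0 \<longrightarrow> P' = (\<lambda>x. 0)) \<and>
       (\<forall>x. ((\<lambda>t. P (vupd x i t)) has_real_derivative P' x) (at (x$i))))
     \<and> poly_deg m (d-1) (partial i P) \<and> (d = 0 \<longrightarrow> partial i P = (\<lambda>x. 0)) \<and>
       (\<forall>x. ((\<lambda>t. P (vupd x i t)) has_real_derivative partial i P x) (at (x$i)))"
proof -
  let ?Q = "\<lambda>P'. poly_deg m (d-1) P' \<and> (d = 0 \<longrightarrow> P' = (\<lambda>x. 0)) \<and>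
       (\<forall>x. ((\<lambda>t. P (vupd x i t)) has_real_derivative P' x) (at (x$i)))"
  have ex: "\<exists>P'. ?Q P'" using poly_deg_main[OF assms(1)] assms(2) by blast
  then have s: "?Q (SOME P'. ?Q P')" by (rule someI_ex)
  have "partial i P = (SOME P'. ?Q P')"
    unfolding partial_def using s by (auto intro!: ext DERIV_imp_deriv)
  then show ?thesis using s by simp
qed

lemma pd_deriv: "poly_deg m d P \<Longrightarrow> i \<noteq> m \<Longrightarrow>
    ((\<lambda>t. P (vupd x i t)) has_real_derivative partial i P x) (at (x$i))"
  using pd_deriv_ex by blast

lemma pd_partial: "poly_deg m d P \<Longrightarrow> i \<noteq> m \<Longrightarrow> poly_deg m (d-1) (partial i P)"
  using pd_deriv_ex by blast

lemma pd_partial0: "poly_deg m 0 P \<Longrightarrow> i \<noteq> m \<Longrightarrow> partial i P = (\<lambda>x. 0)"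
  using pd_deriv_ex by blast

lemma pd_sum: "finite S \<Longrightarrow> (\<And>i. i \<in> S \<Longrightarrow> poly_deg m d (F i)) \<Longrightarrow> poly_deg m d (\<lambda>x. \<Sum>i\<in>S. F i x)"
proof (induction S rule: finite_induct)
  case empty
  then show ?case using poly_deg.pconst[of m d 0] by simp
next
  case (insert a S)
  then show ?case using poly_deg.padd[of m d "F a" "\<lambda>x. \<Sum>i\<in>S. F i x"] by simp
qed

lemma pd_L: "poly_deg m d P \<Longrightarrow> poly_deg m (d-2) (laplacian_without m P)"
proof -
  assume P: "poly_deg m d P"
  have "poly_deg m (d-2) (partial i (partial i P))" if "i \<noteq> m" for i
    using pd_partial[OF pd_partial[OF P that] that] by (simp add: diff_diff_left numeral_2_eq_2)
  then show ?thesis unfolding laplacian_without_def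
    by (intro pd_sum) (auto simp: numeral_2_eq_2)
qed

lemma pd_L0: "poly_deg m d P \<Longrightarrow> d \<le> 1 \<Longrightarrow> laplacian_without m P = (\<lambda>x. 0)"
proof -
  assume P: "poly_deg m d P" and d: "d \<le> 1"
  have "partial i (partial i P) = (\<lambda>x. 0)" if "i \<noteq> m" for i
    using pd_partial[OF P that] d that by (auto intro: pd_partial0)
  then show ?thesis unfolding laplacian_without_def by (simp add: numeral_2_eq_2)
qed

lemma pd_Lpow: "poly_deg m d P \<Longrightarrow> poly_deg m (d - 2*p) ((laplacian_without m ^^ p) P)"
  by (induction p) (auto dest: pd_L simp: diff_diff_left)

lemma pd_pow: "poly_deg m d P \<Longrightarrow> i \<noteq> m \<Longrightarrow> poly_deg m (n + d) (\<lambda>x. x$i ^ n * P x)"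
proof (induction n)
  case 0 then show ?case by simp
next
  case (Suc n)
  then show ?case using poly_deg.pmulx[OF Suc.IH[OF Suc.prems] Suc.prems(2)]
    by (simp add: mult.assoc)
qed

lemma pd_mono_wo: "poly_deg m (deg_wo m \<beta>) (mono_wo m \<beta>)"
proof -
  have "S \<subseteq> UNIV - {m} \<Longrightarrow> poly_deg m (\<Sum>i\<in>S. \<beta> i) (\<lambda>x. \<Prod>i\<in>S. (x $ i) ^ \<beta> i)" for S
  proof (induction S rule: infinite_finite_induct)
    case (infinite A)
    then show ?case by (simp add: poly_deg.pconst)
  next
    case empty
    then show ?case by (simp add: poly_deg.pconst)
  next
    case (insert a S)
    then show ?case using pd_pow[of m "sum \<beta> S" "\<lambda>x. \<Prod>i\<in>S. (x $ i) ^ \<beta> i" a "\<beta> a"] by auto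
  qed
  then show ?thesis unfolding mono_wo_def deg_wo_def by (simp add: fun_eq_iff)
qed



lemma partial_sum_i:
  assumes "finite S" "\<And>p. p \<in> S \<Longrightarrow> poly_deg m (d p) (P p)" "i \<noteq> m"
  shows "partial i (\<lambda>x. \<Sum>p\<in>S. g p (x$m) * P p x) = (\<lambda>x. \<Sum>p\<in>S. g p (x$m) * partial i (P p) x)"
proof
  fix x
  have "((\<lambda>t. \<Sum>p\<in>S. g p (x$m) * P p (vupd x i t)) has_real_derivative
        (\<Sum>p\<in>S. g p (x$m) * partial i (P p) x)) (at (x$i))"
    by (intro DERIV_sum DERIV_cmult pd_deriv[OF assms(2) assms(3)])
  then show "partial i (\<lambda>x. \<Sum>p\<in>S. g p (x$m) * P p x) x = (\<Sum>p\<in>S. g p (x$m) * partial i (P p) x)"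
    unfolding partial_def using assms(3) by (auto intro!: DERIV_imp_deriv)
qed

lemma partial_sum_m:
  assumes "finite S" "\<And>p. p \<in> S \<Longrightarrow> poly_deg m (d p) (P p)"
    "\<And>p t. p \<in> S \<Longrightarrow> (g p has_real_derivative g1 p t) (at t)"
  shows "partial m (\<lambda>x. \<Sum>p\<in>S. g p (x$m) * P p x) = (\<lambda>x. \<Sum>p\<in>S. g1 p (x$m) * P p x)"
proof
  fix x
  have "((\<lambda>t. \<Sum>p\<in>S. g p t * P p x) has_real_derivative
        (\<Sum>p\<in>S. g1 p (x$m) * P p x)) (at (x$m))"
    by (intro DERIV_sum DERIV_cmult_right assms(3))
  moreover have "(\<lambda>t. \<Sum>p\<in>S. g p (vupd x m t $ m) * P p (vupd x m t)) = (\<lambda>t. \<Sum>p\<in>S. g p t * P p x)"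
    using pd_indep[OF assms(2)] by simp
  ultimately show "partial m (\<lambda>x. \<Sum>p\<in>S. g p (x$m) * P p x) x = (\<Sum>p\<in>S. g1 p (x$m) * P p x)"
    unfolding partial_def by (auto intro!: DERIV_imp_deriv)
qed

lemma lap_sum:
  assumes S: "finite S" and P: "\<And>p. p \<in> S \<Longrightarrow> poly_deg m (d p) (P p)"
    and g: "\<And>p t. p \<in> S \<Longrightarrow> (g p has_real_derivative g1 p t) (at t)"
    and g1: "\<And>p t. p \<in> S \<Longrightarrow> (g1 p has_real_derivative g2 p t) (at t)"
  shows "laplacian (\<lambda>x. \<Sum>p\<in>S. g p (x$m) * P p x) =
    (\<lambda>x. \<Sum>p\<in>S. g2 p (x$m) * P p x + g p (x$m) * laplacian_without m (P p) x)"
proof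
  fix x
  let ?F = "\<lambda>x. \<Sum>p\<in>S. g p (x$m) * P p x"
  have mm: "partial m (partial m ?F) = (\<lambda>x. \<Sum>p\<in>S. g2 p (x$m) * P p x)"
    by (simp add: partial_sum_m[OF S P g] partial_sum_m[OF S P g1])
  have ii: "partial i (partial i ?F) = (\<lambda>x. \<Sum>p\<in>S. g p (x$m) * partial i (partial i (P p)) x)"
    if "i \<noteq> m" for i
  proof -
    have "partial i ?F = (\<lambda>x. \<Sum>p\<in>S. g p (x$m) * partial i (P p) x)"
      by (rule partial_sum_i[OF S P that])
    moreover have "partial i (\<lambda>x. \<Sum>p\<in>S. g p (x$m) * partial i (P p) x) = (\<lambda>x. \<Sum>p\<in>S. g p (x$m) * partial i (partial i (P p)) x)"
      by (rule partial_sum_i[OF S pd_partial[OF P that] that])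
    ultimately show ?thesis by simp
  qed
  have "laplacian ?F x = partial m (partial m ?F) x + (\<Sum>i\<in>UNIV - {m}. partial i (partial i ?F) x)"
    unfolding laplacian_def by (simp add: numeral_2_eq_2 sum.remove[of UNIV m])
  also have "\<dots> = (\<Sum>p\<in>S. g2 p (x$m) * P p x) +
      (\<Sum>i\<in>UNIV - {m}. \<Sum>p\<in>S. g p (x$m) * partial i (partial i (P p)) x)"
    by (simp add: mm ii)
  also have "(\<Sum>i\<in>UNIV - {m}. \<Sum>p\<in>S. g p (x$m) * partial i (partial i (P p)) x)
      = (\<Sum>p\<in>S. g p (x$m) * laplacian_without m (P p) x)"
    unfolding laplacian_without_def by (simp add: sum.swap[of _ "UNIV - {m}"] sum_distrib_left numeral_2_eq_2)
  finally show "laplacian ?F x = (\<Sum>p\<in>S. g2 p (x$m) * P p x + g p (x$m) * laplacian_without m (P p) x)"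
    by (simp add: sum.distrib)
qed

lemma Lw_T:
  assumes "poly_deg m d P"
  shows "laplacian_without m (\<lambda>x. g (x$m) * P x) = (\<lambda>x. g (x$m) * laplacian_without m P x)"
proof -
  have "partial i (partial i (\<lambda>x. g (x$m) * P x)) = (\<lambda>x. g (x$m) * partial i (partial i P) x)"
    if "i \<noteq> m" for i
    using partial_sum_i[of "{()}" m "\<lambda>_. d" "\<lambda>_. P" i "\<lambda>_. g"]
      partial_sum_i[of "{()}" m "\<lambda>_. d-1" "\<lambda>_. partial i P" i "\<lambda>_. g"]
      pd_partial[OF assms that] assms that by simp
  then show ?thesis unfolding laplacian_without_def
    by (simp add: numeral_2_eq_2 sum_distrib_left)
qed

lemma Lwpow_T:
  assumes "poly_deg m d P"
  shows "(laplacian_without m ^^ p) (\<lambda>x. g (x$m) * P x) = (\<lambda>x. g (x$m) * (laplacian_without m ^^ p) P x)"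
  by (induction p) (auto simp: Lw_T[OF pd_Lpow[OF assms]])

lemma partial_m_T:
  assumes "poly_deg m d P" "\<And>t. (g has_real_derivative g1 t) (at t)"
  shows "partial m (\<lambda>x. g (x$m) * P x) = (\<lambda>x. g1 (x$m) * P x)"
  using partial_sum_m[of "{()}" m "\<lambda>_. d" "\<lambda>_. P" "\<lambda>_. g" "\<lambda>_. g1"] assms by simp

lemma partial_m_pow_T:
  assumes "poly_deg m d P" "continuous_on UNIV h" "j \<le> n"
  shows "(partial m ^^ j) (\<lambda>x. (antider1 x0 ^^ n) h (x$m) * P x) = (\<lambda>x. (antider1 x0 ^^ (n - j)) h (x$m) * P x)"
  using assms(3)
proof (induction j)
  case 0 then show ?case by simp
next
  case (Suc j)
  then have "n - j = Suc (n - Suc j)" by simp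
  have d: "\<And>t. ((antider1 x0 ^^ Suc (n - Suc j)) h has_real_derivative (antider1 x0 ^^ (n - Suc j)) h t) (at t)"
    using antider1_pow_deriv[OF assms(2)] by blast
  show ?case using Suc partial_m_T[OF assms(1) d] \<open>n - j = Suc (n - Suc j)\<close>
    by simp
qed

lemma antider_T:
  assumes "poly_deg m d P"
  shows "antider x0 m (\<lambda>x. g (x$m) * P x) = (\<lambda>x. antider1 x0 g (x$m) * P x)"
  unfolding antider_def antider1_def oint_def using pd_indep[OF assms] by (auto simp: fun_eq_iff)

lemma antider_pow_T:
  assumes "poly_deg m d P"
  shows "(antider x0 m ^^ n) (\<lambda>x. g (x$m) * P x) = (\<lambda>x. (antider1 x0 ^^ n) g (x$m) * P x)"
  by (induction n) (auto simp: antider_T[OF assms])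



lemma shift_sum:
  "(\<Sum>p=0..n. u p * (X (Suc p)::real)) = (\<Sum>p=0..Suc n. (if p = 0 then 0 else u (p-1)) * X p)"
  by (subst sum.atLeast0_atMost_Suc_shift) simp

lemma coef_id:
  "(-1)^p * real ((Suc j + p - 1) choose p) + (if p = 0 then 0 else (-1)^(p-1) * real ((Suc j + (p-1) - 1) choose (p-1)))
   = ((-1)^p * real ((j + p - 1) choose p) :: real)"
proof (cases p)
  case 0 then show ?thesis by simp
next
  case (Suc r)
  have "Suc (j + r) choose Suc r = (j + r choose r) + (j + r choose Suc r)" by simp
  then show ?thesis using Suc by (simp add: algebra_simps)
qed

theorem corollary5p3:
  fixes k :: nat and m :: "'n::finite" and \<beta> :: "'n \<Rightarrow> nat"
    and f :: "real \<Rightarrow> real" and x0 :: real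
    and q W Q1 Q2 :: "real^'n \<Rightarrow> real" and lam :: nat
  assumes f_C1: "f C1_differentiable_on UNIV"
    and q_def: "q = (\<lambda>x. f (x $ m) * mono_wo m \<beta> x)"
    and lam_def: "lam = nat \<lceil>(real (deg_wo m \<beta>) - 1) / 2\<rceil>"
    and W_def: "W = (antider x0 m ^^ (2 * lam + 2 * k)) q"
    and Q1_def: "Q1 = (\<lambda>x. \<Sum>p = 0..lam. (-1) ^ p * real ((k + p - 1) choose p) *
                   (partial m ^^ (2 * lam - 2 * p)) ((laplacian_without m ^^ p) W) x)"
    and Q2_def: "Q2 = (\<lambda>x. \<Sum>p = 0..lam. (-1) ^ p * real ((k + p - 1) choose p) *
                   (antider x0 m ^^ (2 * k + 2 * p)) ((laplacian_without m ^^ p) q) x)"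
  shows "(\<forall>x. W x = mono_wo m \<beta> x * (antider1 x0 ^^ (2 * lam + 2 * k)) f (x $ m))
       \<and> Q1 = Q2 \<and> (laplacian ^^ k) Q1 = q"
proof -
  define M where "M = mono_wo m \<beta>"
  define D where "D = deg_wo m \<beta>"
  define a where "a n = (antider1 x0 ^^ n) f" for n
  define Lp where "Lp p = (laplacian_without m ^^ p) M" for p
  define c where "c j p = (-1)^p * real ((j + p - 1) choose p)" for j p :: nat
  define Qk where "Qk j = (\<lambda>x. \<Sum>p=0..lam. (c j p * a (2*j+2*p) (x$m)) * Lp p x)" for j
  have fc: "continuous_on UNIV f" using f_C1 by (rule C1_differentiable_imp_continuous_on)
  have pM: "poly_deg m D M" unfolding M_def D_def by (rule pd_mono_wo)
  have pL: "poly_deg m (D - 2*p) (Lp p)" for p unfolding Lp_def by (rule pd_Lpow[OF pM])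
  have da: "(a (Suc n) has_real_derivative a n t) (at t)" for n t
    unfolding a_def by (rule antider1_pow_deriv[OF fc])
  have Dlam: "D \<le> 2*lam + 1"
  proof -
    have "(real D - 1) / 2 \<le> real lam" unfolding lam_def D_def by linarith
    then have "real D \<le> real (2*lam+1)" by simp
    then show ?thesis by (simp only: of_nat_le_iff)
  qed
  have Lzero: "Lp (Suc lam) = (\<lambda>x. 0)"
    using pd_L0[OF pL[of lam]] Dlam unfolding Lp_def by simp
  have q2: "q = (\<lambda>x. a 0 (x$m) * M x)" unfolding q_def a_def M_def by simp
  have Wf: "W = (\<lambda>x. a (2*lam+2*k) (x$m) * M x)"
    unfolding W_def q_def a_def M_def by (rule antider_pow_T[OF pM[unfolded M_def]])
  have part1: "\<forall>x. W x = mono_wo m \<beta> x * (antider1 x0 ^^ (2 * lam + 2 * k)) f (x $ m)"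
    unfolding Wf a_def M_def by simp
  have term1: "(partial m ^^ (2 * lam - 2 * p)) ((laplacian_without m ^^ p) W) =
      (\<lambda>x. a (2*k+2*p) (x$m) * Lp p x)" if "p \<le> lam" for p
  proof -
    have "(laplacian_without m ^^ p) W = (\<lambda>x. a (2*lam+2*k) (x$m) * Lp p x)"
      unfolding Wf Lp_def by (rule Lwpow_T[OF pM])
    moreover have "2*lam+2*k - (2*lam-2*p) = 2*k+2*p" using that by simp
    ultimately show ?thesis
      unfolding a_def using partial_m_pow_T[OF pL[of p] fc, of "2 * lam - 2 * p" "2*lam+2*k" x0] by simp
  qed
  have term2: "(antider x0 m ^^ (2 * k + 2 * p)) ((laplacian_without m ^^ p) q) =
      (\<lambda>x. a (2*k+2*p) (x$m) * Lp p x)" for p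
  proof -
    have "(laplacian_without m ^^ p) q = (\<lambda>x. a 0 (x$m) * Lp p x)"
      unfolding q2 Lp_def by (rule Lwpow_T[OF pM])
    then show ?thesis unfolding a_def using antider_pow_T[OF pL[of p]] by simp
  qed
  have Q1k: "Q1 = Qk k"
    unfolding Q1_def Qk_def c_def by (intro ext sum.cong refl) (simp add: term1)
  have Q2k: "Q2 = Qk k"
    unfolding Q2_def Qk_def c_def by (intro ext sum.cong refl) (simp add: term2)
  have step: "laplacian (Qk (Suc j)) = Qk j" for j
  proof -
    have "laplacian (Qk (Suc j)) = (\<lambda>x. \<Sum>p=0..lam.
        (c (Suc j) p * a (2*j+2*p) (x$m)) * Lp p x + (c (Suc j) p * a (2*Suc j+2*p) (x$m)) * laplacian_without m (Lp p) x)"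
      unfolding Qk_def
    proof (rule lap_sum[where d="\<lambda>p. D - 2*p"])
      show "\<And>p. poly_deg m (D - 2*p) (Lp p)" by (rule pL)
      fix p t
      have "2*Suc j+2*p = Suc (Suc (2*j+2*p))" by simp
      then show "((\<lambda>t. c (Suc j) p * a (2 * Suc j + 2 * p) t) has_real_derivative c (Suc j) p * a (Suc (2*j+2*p)) t) (at t)"
        by (simp only:) (intro DERIV_cmult da)
      show "((\<lambda>t. c (Suc j) p * a (Suc (2*j+2*p)) t) has_real_derivative c (Suc j) p * a (2*j+2*p) t) (at t)"
        by (intro DERIV_cmult da)
    qed simp
    also have "\<dots> = Qk j"
    proof
      fix x
      define X where "X = (\<lambda>r::nat. a (2*j+2*r) (x$m) * Lp r x)"
      have L1: "laplacian_without m (Lp p) = Lp (Suc p)" for p unfolding Lp_def by simp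
      have "(\<Sum>p=0..lam. (c (Suc j) p * a (2*Suc j+2*p) (x$m)) * laplacian_without m (Lp p) x)
          = (\<Sum>p=0..lam. c (Suc j) p * X (Suc p))"
        unfolding X_def L1 by (intro sum.cong refl) simp
      also have "\<dots> = (\<Sum>p=0..Suc lam. (if p = 0 then 0 else c (Suc j) (p-1)) * X p)"
        by (rule shift_sum)
      also have "\<dots> = (\<Sum>p=0..lam. (if p = 0 then 0 else c (Suc j) (p-1)) * X p)"
        by (simp add: X_def Lzero)
      finally have e2: "(\<Sum>p=0..lam. (c (Suc j) p * a (2*Suc j+2*p) (x$m)) * laplacian_without m (Lp p) x)
          = (\<Sum>p=0..lam. (if p = 0 then 0 else c (Suc j) (p-1)) * X p)" .
      have e1: "(\<Sum>p=0..lam. (c (Suc j) p * a (2*j+2*p) (x$m)) * Lp p x) = (\<Sum>p=0..lam. c (Suc j) p * X p)"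
        unfolding X_def by (intro sum.cong refl) simp
      have "(\<Sum>p=0..lam. (c (Suc j) p * a (2*j+2*p) (x$m)) * Lp p x + (c (Suc j) p * a (2*Suc j+2*p) (x$m)) * laplacian_without m (Lp p) x)
         = (\<Sum>p=0..lam. (c (Suc j) p + (if p = 0 then 0 else c (Suc j) (p-1))) * X p)"
        by (simp only: sum.distrib e1 e2 distrib_right)
      also have "\<dots> = (\<Sum>p=0..lam. c j p * X p)"
        unfolding c_def by (intro sum.cong refl) (simp only: coef_id)
      also have "\<dots> = Qk j x"
        unfolding Qk_def X_def by (intro sum.cong refl) simp
      finally show "(\<Sum>p=0..lam. (c (Suc j) p * a (2*j+2*p) (x$m)) * Lp p x + (c (Suc j) p * a (2*Suc j+2*p) (x$m)) * laplacian_without m (Lp p) x) = Qk j x" .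
    qed
    finally show ?thesis .
  qed
  have iter: "(laplacian ^^ n) (Qk n) = Qk 0" for n
  proof (induction n)
    case 0 then show ?case by simp
  next
    case (Suc n)
    have "(laplacian ^^ Suc n) (Qk (Suc n)) = (laplacian ^^ n) (laplacian (Qk (Suc n)))"
      by (simp only: funpow_Suc_right comp_def)
    then show ?case using Suc step by simp
  qed
  have Q0: "Qk 0 = q"
  proof
    fix x
    have "Qk 0 x = c 0 0 * a 0 (x$m) * Lp 0 x + (\<Sum>p=Suc 0..lam. (c 0 p * a (2*p) (x$m)) * Lp p x)"
      unfolding Qk_def by (simp add: sum.atLeast_Suc_atMost)
    also have "(\<Sum>p=Suc 0..lam. (c 0 p * a (2*p) (x$m)) * Lp p x) = 0"
      by (intro sum.neutral) (auto simp: c_def)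
    finally show "Qk 0 x = q x" by (simp add: q2 c_def Lp_def)
  qed
  show ?thesis using part1 Q1k Q2k iter[of k] Q0 by simp
qed

end
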